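(* Let $\Delta$ be a $d$-dimensional IP lattice simplex ($d\ge2$) of Gorenstein index $g$ with local Gorenstein indices $g_0,\dots,g_d$. Then, for a suitable ordering $v_0,\dots,v_d$ of its vertices, $\Delta\cong\Delta(P)$ for a matrix $P$ satisfying all hypotheses (i)–(iii) of the following construction with $A=A(\Delta)=(\alpha_0,\dots,\alpha_d)$, $\alpha_i=g|Q_\Delta|/q_i$: $P=[v_0\cdots v_d]$ is a $d\times(d+1)$ integer matrix, upper triangular in its first $d$ columns with entries $a_{ik}$ ($a_{ik}=0$ for $i>k$) and last column $(-b_1,\dots,-b_d)^T$, such that for all $k$: (i) $a_{kk}\ge1$ and $a_{kk}\mid\alpha_{k-1}$; (ii) $0\le a_{ik}<a_{kk}$ for $i<k$; (iii) $b_kw_d=a_{kk}w_{k-1}+\dots+a_{kd}w_{d-1}$, where $w_i=\mathrm{lcm}(\alpha_0,\dots,\alpha_d)/\alpha_i$.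
   Context: An IP lattice simplex is a full-dimensional simplex in $\mathbb{Q}^d$ with vertices in $\mathbb{Z}^d$ containing the origin in its interior. $\cong$ means equality up to $\mathrm{GL}(d,\mathbb{Z})$; $\Delta(P)$ is the convex hull of the columns of $P$. Weight system $Q_\Delta=(q_0,\dots,q_d)$, $q_i=|\det(v_j:j\ne i)|$, $|Q_\Delta|=\sum q_i$. Dual $\Delta^*=\{u:\langle u,v\rangle\ge-1\ \forall v\in\Delta\}$; the $k$-th local Gorenstein index is the least $g_k\ge1$ with $g_ku_k\in\mathbb{Z}^d$ for the vertex $u_k$ of $\Delta^*$ with $\langle u_k,v_j\rangle=-1$ ($j\ne k$); the Gorenstein index is $\mathrm{lcm}(g_0,\dots,g_d)$. The tuple $A(\Delta)$ consists of positive integers with $\sum1/\alpha_i=1/g$. *)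

theory Defs
  imports "Jordan_Normal_Form.Determinant" "HOL-Combinatorics.Permutations"
begin

text \<open>A lattice simplex in Q^d is given by its vertex family v_0,...,v_d,
  v :: nat => nat => int, where v j i is the i-th coordinate (i < d) of the
  vertex v_j (j <= d).\<close>

definition in_conv :: "nat \<Rightarrow> (nat \<Rightarrow> nat \<Rightarrow> int) \<Rightarrow> (nat \<Rightarrow> rat) \<Rightarrow> bool" where
  "in_conv d v x \<longleftrightarrow> (\<exists>l :: nat \<Rightarrow> rat. (\<forall>j\<le>d. l j \<ge> 0) \<and> (\<Sum>j\<le>d. l j) = 1 \<and>
      (\<forall>i<d. x i = (\<Sum>j\<le>d. l j * of_int (v j i))))"

definition origin_in_interior :: "nat \<Rightarrow> (nat \<Rightarrow> nat \<Rightarrow> int) \<Rightarrow> bool" where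
  "origin_in_interior d v \<longleftrightarrow> (\<exists>e::rat. e > 0 \<and>
      (\<forall>x. (\<forall>i<d. \<bar>x i\<bar> < e) \<longrightarrow> in_conv d v x))"

definition affinely_indep :: "nat \<Rightarrow> (nat \<Rightarrow> nat \<Rightarrow> int) \<Rightarrow> bool" where
  "affinely_indep d v \<longleftrightarrow> (\<forall>m :: nat \<Rightarrow> rat.
      (\<Sum>j\<le>d. m j) = 0 \<and> (\<forall>i<d. (\<Sum>j\<le>d. m j * of_int (v j i)) = 0) \<longrightarrow> (\<forall>j\<le>d. m j = 0))"

definition IP_lattice_simplex :: "nat \<Rightarrow> (nat \<Rightarrow> nat \<Rightarrow> int) \<Rightarrow> bool" where
  "IP_lattice_simplex d v \<longleftrightarrow> affinely_indep d v \<and> origin_in_interior d v"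

text \<open>Weight q_i = |det(v_j : j \<noteq> i)|, columns in increasing order of j.\<close>
definition weight :: "nat \<Rightarrow> (nat \<Rightarrow> nat \<Rightarrow> int) \<Rightarrow> nat \<Rightarrow> nat" where
  "weight d v k = nat \<bar>det (mat d d (\<lambda>(r, c). v (if c < k then c else Suc c) r))\<bar>"

definition total_weight :: "nat \<Rightarrow> (nat \<Rightarrow> nat \<Rightarrow> int) \<Rightarrow> nat" where
  "total_weight d v = (\<Sum>i\<le>d. weight d v i)"

definition dual_vertex :: "nat \<Rightarrow> (nat \<Rightarrow> nat \<Rightarrow> int) \<Rightarrow> nat \<Rightarrow> nat \<Rightarrow> rat" where
  "dual_vertex d v k = (THE u. (\<forall>i\<ge>d. u i = 0) \<and>
      (\<forall>j\<le>d. j \<noteq> k \<longrightarrow> (\<Sum>i<d. u i * of_int (v j i)) = -1))"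

definition local_gorenstein_index :: "nat \<Rightarrow> (nat \<Rightarrow> nat \<Rightarrow> int) \<Rightarrow> nat \<Rightarrow> nat" where
  "local_gorenstein_index d v k =
     (LEAST g::nat. g \<ge> 1 \<and> (\<forall>i<d. of_nat g * dual_vertex d v k i \<in> \<int>))"

definition gorenstein_index :: "nat \<Rightarrow> (nat \<Rightarrow> nat \<Rightarrow> int) \<Rightarrow> nat" where
  "gorenstein_index d v = Lcm (local_gorenstein_index d v ` {..d})"

text \<open>alpha_i = g |Q| / q_i (an integer by the paper).\<close>
definition alpha :: "nat \<Rightarrow> (nat \<Rightarrow> nat \<Rightarrow> int) \<Rightarrow> nat \<Rightarrow> nat" where
  "alpha d v i = gorenstein_index d v * total_weight d v div weight d v i"

definition wvec :: "nat \<Rightarrow> (nat \<Rightarrow> nat \<Rightarrow> int) \<Rightarrow> nat \<Rightarrow> nat" where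
  "wvec d v i = Lcm (alpha d v ` {..d}) div alpha d v i"

end

theory Submission
  imports Defs
begin


definition reach :: "nat \<Rightarrow> int mat \<Rightarrow> int mat \<Rightarrow> bool" where
 "reach n V M \<longleftrightarrow> (\<exists>U. U \<in> carrier_mat n n \<and> (det U = 1 \<or> det U = -1) \<and> M = U * V)"

lemma reach_refl: "V \<in> carrier_mat n n \<Longrightarrow> reach n V V"
  unfolding reach_def by (intro exI[of _ "1\<^sub>m n"]) auto

lemma reach_carrier: "V \<in> carrier_mat n n \<Longrightarrow> reach n V M \<Longrightarrow> M \<in> carrier_mat n n"
  unfolding reach_def by auto

lemma reach_mult:
  assumes "V \<in> carrier_mat n n" "reach n V M" "E \<in> carrier_mat n n" "det E = 1 \<or> det E = -1"
  shows "reach n V (E * M)"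
proof -
  obtain U where U: "U \<in> carrier_mat n n" "det U = 1 \<or> det U = -1" "M = U * V"
    using assms(2) reach_def by auto
  have "E * M = (E * U) * V" using U assms by (simp add: assoc_mult_mat)
  moreover have "det (E*U) = det E * det U" using det_mult U assms by blast
  ultimately show ?thesis unfolding reach_def using U assms
    by (intro exI[of _ "E*U"]) auto
qed

lemma reach_addrow: "V \<in> carrier_mat n n \<Longrightarrow> reach n V M \<Longrightarrow> k \<noteq> l \<Longrightarrow> l < n
  \<Longrightarrow> reach n V (addrow a k l M)"
  using addrow_mat[of M n n l a k] reach_mult[of V n M "addrow_mat n a k l"]
    det_addrow_mat[of k l n a] reach_carrier by auto

lemma reach_swaprows: "V \<in> carrier_mat n n \<Longrightarrow> reach n V M \<Longrightarrow> k \<noteq> l \<Longrightarrow> l < n \<Longrightarrow> k < n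
  \<Longrightarrow> reach n V (swaprows k l M)"
  using swaprows_mat[of M n n k l] reach_mult[of V n M "swaprows_mat n k l"]
    det_swaprows_mat[of k n l] reach_carrier by auto

lemma reach_multrow: "V \<in> carrier_mat n n \<Longrightarrow> reach n V M \<Longrightarrow> k < n
  \<Longrightarrow> reach n V (multrow k (-1) M)"
  using multrow_mat[of M n n k "-1"] reach_mult[of V n M "multrow_mat n k (-1)"]
    det_multrow_mat[of k n "-1"] reach_carrier by auto

lemma euclid:
  assumes V: "V \<in> carrier_mat n n" and p: "p < n" and q: "q < n" and pq: "p \<noteq> q" and k: "k < n"
  shows "reach n V M \<Longrightarrow> \<exists>M'. reach n V M' \<and> M' $$ (q,k) = 0 \<and>
     (\<forall>r<n. r \<noteq> p \<longrightarrow> r \<noteq> q \<longrightarrow> (\<forall>c<n. M' $$ (r,c) = M $$ (r,c))) \<and>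
     (\<forall>c<n. M $$ (p,c) = 0 \<longrightarrow> M $$ (q,c) = 0 \<longrightarrow> M' $$ (p,c) = 0 \<and> M' $$ (q,c) = 0)"
proof (induction "nat \<bar>M $$ (q,k)\<bar>" arbitrary: M rule: less_induct)
  case less
  have Mc: "M \<in> carrier_mat n n" using reach_carrier V less.prems by blast
  show ?case
  proof (cases "M $$ (q,k) = 0")
    case True then show ?thesis using less.prems by (intro exI[of _ M]) auto
  next
    case False
    define a where "a = - (M $$ (p,k) div M $$ (q,k))"
    define M1 where "M1 = addrow a p q M"
    define M2 where "M2 = swaprows p q M1"
    have r2: "reach n V M2" unfolding M2_def M1_def
      using reach_swaprows reach_addrow V less.prems p q pq by blast
    have M1e: "\<And>r c. r < n \<Longrightarrow> c < n \<Longrightarrow> M1 $$ (r,c) = (if r = p then a * M $$ (q,c) + M $$ (p,c) else M $$ (r,c))"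
      unfolding M1_def using Mc by auto
    have M2e: "\<And>r c. r < n \<Longrightarrow> c < n \<Longrightarrow> M2 $$ (r,c) = (if r = p then M1 $$ (q,c) else if r = q then M1 $$ (p,c) else M1 $$ (r,c))"
      unfolding M2_def using Mc M1_def by auto
    have e: "M2 $$ (q,k) = M $$ (p,k) mod M $$ (q,k)"
      using M2e[OF q k] M1e[OF p k] pq unfolding a_def
      by (simp add: minus_div_mult_eq_mod[symmetric] algebra_simps)
    have lt: "nat \<bar>M2 $$ (q,k)\<bar> < nat \<bar>M $$ (q,k)\<bar>" unfolding e using abs_mod_less False by simp
    obtain M' where M': "reach n V M'" "M' $$ (q,k) = 0"
      "\<forall>r<n. r \<noteq> p \<longrightarrow> r \<noteq> q \<longrightarrow> (\<forall>c<n. M' $$ (r,c) = M2 $$ (r,c))"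
      "\<forall>c<n. M2 $$ (p,c) = 0 \<longrightarrow> M2 $$ (q,c) = 0 \<longrightarrow> M' $$ (p,c) = 0 \<and> M' $$ (q,c) = 0"
      using less.hyps[OF lt r2] by blast
    show ?thesis
    proof (intro exI[of _ M'] conjI allI impI)
      fix r c assume "r < n" "r \<noteq> p" "r \<noteq> q" "c < n"
      then show "M' $$ (r,c) = M $$ (r,c)" using M'(3) M2e M1e by auto
    next
      fix c assume "c < n" "M $$ (p,c) = 0" "M $$ (q,c) = 0"
      then have "M2 $$ (p,c) = 0 \<and> M2 $$ (q,c) = 0" using M2e M1e p q pq by auto
      then show "M' $$ (p,c) = 0" "M' $$ (q,c) = 0" using M'(4) \<open>c < n\<close> by auto
    qed (use M' in auto)
  qed
qed

definition tri :: "nat \<Rightarrow> nat \<Rightarrow> int mat \<Rightarrow> bool" where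
  "tri n j M \<longleftrightarrow> (\<forall>c<j. \<forall>r<n. c < r \<longrightarrow> M $$ (r,c) = 0)"

lemma col_step:
  assumes V: "V \<in> carrier_mat n n" and M: "reach n V M" "tri n j M" and j: "j < n"
  shows "\<exists>M'. reach n V M' \<and> tri n (Suc j) M'"
proof -
  have "\<exists>M'. reach n V M' \<and> tri n j M' \<and> (\<forall>q. j < q \<longrightarrow> q < j+1+m \<longrightarrow> q < n \<longrightarrow> M' $$ (q,j) = 0)" for m
  proof (induction m)
    case 0
    then show ?case using M by auto
  next
    case (Suc m)
    then obtain M1 where M1: "reach n V M1" "tri n j M1"
      "\<forall>q. j < q \<longrightarrow> q < j+1+m \<longrightarrow> q < n \<longrightarrow> M1 $$ (q,j) = 0" by blast
    show ?case
    proof (cases "j+1+m < n")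
      case False
      then show ?thesis using M1 by (intro exI[of _ M1]) auto
    next
      case True
      obtain M2 where M2: "reach n V M2" "M2 $$ (j+1+m,j) = 0"
        "\<forall>r<n. r \<noteq> j \<longrightarrow> r \<noteq> j+1+m \<longrightarrow> (\<forall>c<n. M2 $$ (r,c) = M1 $$ (r,c))"
        "\<forall>c<n. M1 $$ (j,c) = 0 \<longrightarrow> M1 $$ (j+1+m,c) = 0 \<longrightarrow> M2 $$ (j,c) = 0 \<and> M2 $$ (j+1+m,c) = 0"
        using euclid[OF V j True _ j M1(1)] by auto
      have "tri n j M2" unfolding tri_def
      proof (intro allI impI)
        fix c r assume cr: "c < j" "r < n" "c < r"
        show "M2 $$ (r,c) = 0"
        proof (cases "r = j \<or> r = j+1+m")
          case True
          have "M1 $$ (j,c) = 0" "M1 $$ (j+1+m,c) = 0" using M1(2) cr True j \<open>j+1+m < n\<close> unfolding tri_def by auto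
          then show ?thesis using M2(4) cr j True by auto
        next
          case False
          then show ?thesis using M2(3) M1(2) cr j unfolding tri_def by auto
        qed
      qed
      moreover have "\<forall>q. j < q \<longrightarrow> q < j+1+Suc m \<longrightarrow> q < n \<longrightarrow> M2 $$ (q,j) = 0"
      proof (intro allI impI)
        fix q assume q: "j < q" "q < j+1+Suc m" "q < n"
        show "M2 $$ (q,j) = 0"
        proof (cases "q = j+1+m")
          case True then show ?thesis using M2(2) by simp
        next
          case False then show ?thesis using M2(3) M1(3) q j by auto
        qed
      qed
      ultimately show ?thesis using M2(1) by blast
    qed
  qed
  from this[of n] obtain M' where "reach n V M'" "tri n j M'"
    "\<forall>q. j < q \<longrightarrow> q < n \<longrightarrow> M' $$ (q,j) = 0" by auto
  then show ?thesis unfolding tri_def using less_Suc_eq by (intro exI[of _ M']) auto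
qed

lemma triangularize:
  assumes V: "V \<in> carrier_mat n n"
  shows "\<exists>M. reach n V M \<and> tri n n M"
proof -
  have "j \<le> n \<Longrightarrow> \<exists>M. reach n V M \<and> tri n j M" for j
  proof (induction j)
    case 0 then show ?case using reach_refl[OF V] unfolding tri_def by auto
  next
    case (Suc j) then show ?case using col_step[OF V] by auto
  qed
  then show ?thesis by auto
qed


lemma prod_list_pm1: "\<forall>x\<in>set xs. x = 1 \<or> x = -1 \<Longrightarrow> prod_list xs = 1 \<or> prod_list xs = (-1::int)"
  by (induction xs) auto

lemma tri_diag_nz:
  assumes V: "V \<in> carrier_mat n n" "det V \<noteq> 0" and M: "reach n V M" "tri n n M" and i: "i < n"
  shows "M $$ (i,i) \<noteq> 0"
proof -
  obtain U where U: "U \<in> carrier_mat n n" "det U = 1 \<or> det U = -1" "M = U * V"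
    using M(1) reach_def by auto
  have dM: "det M \<noteq> 0" using U V det_mult[of U n V] by auto
  have Mc: "M \<in> carrier_mat n n" using U V by auto
  have ut: "upper_triangular M" using M(2) Mc unfolding tri_def upper_triangular_def by auto
  have "0 \<notin> set (diag_mat M)" using upper_triangular_imp_det_eq_0_iff[OF Mc ut] dM by auto
  then show ?thesis using i Mc unfolding diag_mat_def by auto
qed

lemma sign_norm:
  assumes V: "V \<in> carrier_mat n n" "det V \<noteq> 0"
  shows "\<exists>M. reach n V M \<and> tri n n M \<and> (\<forall>i<n. M $$ (i,i) > 0)"
proof -
  obtain M0 where M0: "reach n V M0" "tri n n M0" using triangularize[OF V(1)] by auto
  have "m \<le> n \<Longrightarrow> \<exists>M. reach n V M \<and> tri n n M \<and> (\<forall>i<m. M $$ (i,i) > 0)" for m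
  proof (induction m)
    case 0 then show ?case using M0 by auto
  next
    case (Suc m)
    then obtain M where M: "reach n V M" "tri n n M" "\<forall>i<m. M $$ (i,i) > 0" by auto
    have Mc: "M \<in> carrier_mat n n" using reach_carrier[OF V(1) M(1)] .
    have nz: "M $$ (m,m) \<noteq> 0" using tri_diag_nz[OF V M(1,2)] Suc by auto
    show ?case
    proof (cases "M $$ (m,m) > 0")
      case True then show ?thesis using M less_Suc_eq by (intro exI[of _ M]) auto
    next
      case False
      define M' where "M' = multrow m (-1) M"
      have e: "\<And>r c. r < n \<Longrightarrow> c < n \<Longrightarrow> M' $$ (r,c) = (if r = m then - M $$ (r,c) else M $$ (r,c))"
        unfolding M'_def using Mc by auto
      have "reach n V M'" unfolding M'_def using reach_multrow V M Suc by auto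
      moreover have "tri n n M'" using M(2) e unfolding tri_def by auto
      moreover have "\<forall>i<Suc m. M' $$ (i,i) > 0"
        using M(3) e False nz Suc.prems less_Suc_eq by auto
      ultimately show ?thesis by blast
    qed
  qed
  then show ?thesis by auto
qed

definition red :: "nat \<Rightarrow> nat \<Rightarrow> int mat \<Rightarrow> bool" where
  "red n j M \<longleftrightarrow> (\<forall>c<j. \<forall>i<c. 0 \<le> M $$ (i,c) \<and> M $$ (i,c) < M $$ (c,c))"

lemma red_step:
  assumes V: "V \<in> carrier_mat n n" and M: "reach n V M" "tri n n M" "\<forall>i<n. M $$ (i,i) > 0" "red n j M"
    and j: "j < n"
  shows "\<exists>M'. reach n V M' \<and> tri n n M' \<and> (\<forall>i<n. M' $$ (i,i) > 0) \<and> red n (Suc j) M'"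
proof -
  have "m \<le> j \<Longrightarrow> \<exists>M'. reach n V M' \<and> tri n n M' \<and> (\<forall>i<n. M' $$ (i,i) > 0) \<and> red n j M'
     \<and> (\<forall>i<m. 0 \<le> M' $$ (i,j) \<and> M' $$ (i,j) < M' $$ (j,j))" for m
  proof (induction m)
    case 0 then show ?case using M by auto
  next
    case (Suc m)
    then obtain M1 where M1: "reach n V M1" "tri n n M1" "\<forall>i<n. M1 $$ (i,i) > 0" "red n j M1"
      "\<forall>i<m. 0 \<le> M1 $$ (i,j) \<and> M1 $$ (i,j) < M1 $$ (j,j)" by auto
    have Mc: "M1 \<in> carrier_mat n n" using reach_carrier[OF V(1) M1(1)] .
    have mj: "m < j" "m < n" using Suc j by auto
    define a where "a = - (M1 $$ (m,j) div M1 $$ (j,j))"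
    define M' where "M' = addrow a m j M1"
    have e: "\<And>r c. r < n \<Longrightarrow> c < n \<Longrightarrow> M' $$ (r,c) = (if r = m then a * M1 $$ (j,c) + M1 $$ (r,c) else M1 $$ (r,c))"
      unfolding M'_def using Mc by auto
    have z: "\<And>c. c < j \<Longrightarrow> M1 $$ (j,c) = 0" using M1(2) j unfolding tri_def by auto
    have ecol: "\<And>r c. r < n \<Longrightarrow> c < j \<Longrightarrow> M' $$ (r,c) = M1 $$ (r,c)" using e z j by auto
    have "reach n V M'" unfolding M'_def using reach_addrow V M1 mj j by auto
    moreover have "tri n n M'" unfolding tri_def
    proof (intro allI impI)
      fix c r assume "c < n" "r < n" "c < r"
      then show "M' $$ (r,c) = 0" using e M1(2) z mj unfolding tri_def
        by (cases "r = m") auto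
    qed
    moreover have "\<forall>i<n. M' $$ (i,i) > 0"
      using e M1(3) z mj by auto
    moreover have "red n j M'" unfolding red_def
    proof (intro allI impI)
      fix c i assume ci: "c < j" "i < c"
      then have "M' $$ (i,c) = M1 $$ (i,c)" "M' $$ (c,c) = M1 $$ (c,c)" using ecol j by auto
      then show "0 \<le> M' $$ (i,c) \<and> M' $$ (i,c) < M' $$ (c,c)" using M1(4) ci unfolding red_def by auto
    qed
    moreover have "\<forall>i<Suc m. 0 \<le> M' $$ (i,j) \<and> M' $$ (i,j) < M' $$ (j,j)"
    proof (intro allI impI)
      fix i assume i: "i < Suc m"
      have jj: "M' $$ (j,j) = M1 $$ (j,j)" using e mj j by auto
      show "0 \<le> M' $$ (i,j) \<and> M' $$ (i,j) < M' $$ (j,j)"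
      proof (cases "i = m")
        case True
        have "M' $$ (i,j) = M1 $$ (m,j) mod M1 $$ (j,j)" using e[of m j] True mj j unfolding a_def
          by (simp add: minus_div_mult_eq_mod[symmetric] algebra_simps)
        then show ?thesis using jj M1(3) j by simp
      next
        case False
        then show ?thesis using e jj M1(5) i mj j by auto
      qed
    qed
    ultimately show ?case by blast
  qed
  from this[of j] obtain M' where M': "reach n V M'" "tri n n M'" "\<forall>i<n. M' $$ (i,i) > 0" "red n j M'"
     "\<forall>i<j. 0 \<le> M' $$ (i,j) \<and> M' $$ (i,j) < M' $$ (j,j)" by auto
  have "red n (Suc j) M'" using M'(4,5) unfolding red_def using less_Suc_eq by auto
  then show ?thesis using M' by blast
qed

lemma hnf_exists:
  fixes V :: "int mat"
  assumes V: "V \<in> carrier_mat n n" "det V \<noteq> 0"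
  shows "\<exists>U. U \<in> carrier_mat n n \<and> (det U = 1 \<or> det U = -1) \<and>
    (\<forall>i<n. \<forall>j<i. (U*V) $$ (i,j) = 0) \<and> (\<forall>k<n. (U*V) $$ (k,k) \<ge> 1) \<and>
    (\<forall>k<n. \<forall>i<k. 0 \<le> (U*V) $$ (i,k) \<and> (U*V) $$ (i,k) < (U*V) $$ (k,k))"
proof -
  obtain M0 where M0: "reach n V M0" "tri n n M0" "\<forall>i<n. M0 $$ (i,i) > 0"
    using sign_norm[OF V] by auto
  have "m \<le> n \<Longrightarrow> \<exists>M. reach n V M \<and> tri n n M \<and> (\<forall>i<n. M $$ (i,i) > 0) \<and> red n m M" for m
  proof (induction m)
    case 0 then show ?case using M0 unfolding red_def by auto
  next
    case (Suc m)
    then obtain M where "reach n V M" "tri n n M" "\<forall>i<n. M $$ (i,i) > 0" "red n m M" by auto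
    then show ?case using red_step[OF V(1)] Suc.prems by (meson Suc_le_lessD)
  qed
  from this[of n] obtain M where M: "reach n V M" "tri n n M" "\<forall>i<n. M $$ (i,i) > 0" "red n n M"
    by auto
  obtain U where U: "U \<in> carrier_mat n n" "det U = 1 \<or> det U = -1" "M = U * V"
    using M(1) reach_def by auto
  have "\<forall>i<n. \<forall>j<i. M $$ (i,j) = 0" using M(2) unfolding tri_def by auto
  moreover have "\<forall>k<n. M $$ (k,k) \<ge> 1" using M(3) by auto
  moreover have "\<forall>k<n. \<forall>i<k. 0 \<le> M $$ (i,k) \<and> M $$ (i,k) < M $$ (k,k)" using M(4) unfolding red_def by auto
  ultimately show ?thesis using U by blast
qed




definition ins :: "nat \<Rightarrow> nat \<Rightarrow> nat" where "ins k c = (if c < k then c else Suc c)"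

lemma sum_ins:
  assumes "k \<le> d"
  shows "(\<Sum>j\<le>d. f j) = f k + (\<Sum>c<d. f (ins k c))"
proof -
  have img: "ins k ` {..<d} = {..d} - {k}"
  proof
    show "ins k ` {..<d} \<subseteq> {..d} - {k}" unfolding ins_def by auto
    show "{..d} - {k} \<subseteq> ins k ` {..<d}"
    proof
      fix j assume j: "j \<in> {..d} - {k}"
      show "j \<in> ins k ` {..<d}"
      proof (cases "j < k")
        case True then show ?thesis using j assms unfolding ins_def
          by (intro image_eqI[of _ _ j]) auto
      next
        case False then show ?thesis using j assms unfolding ins_def
          by (intro image_eqI[of _ _ "j - 1"]) auto
      qed
    qed
  qed
  have inj: "inj_on (ins k) {..<d}" unfolding ins_def inj_on_def by auto
  have "(\<Sum>j\<le>d. f j) = f k + (\<Sum>j\<in>{..d} - {k}. f j)"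
    using assms by (simp add: sum.remove)
  also have "(\<Sum>j\<in>{..d} - {k}. f j) = (\<Sum>c<d. f (ins k c))"
    unfolding img[symmetric] by (simp add: sum.reindex[OF inj])
  finally show ?thesis .
qed

locale ip =
  fixes d :: nat and v :: "nat \<Rightarrow> nat \<Rightarrow> int"
  assumes ip: "IP_lattice_simplex d v"
begin

lemma aff: "(\<Sum>j\<le>d. (m j :: rat)) = 0 \<Longrightarrow> (\<forall>i<d. (\<Sum>j\<le>d. m j * of_int (v j i)) = 0) \<Longrightarrow> j \<le> d \<Longrightarrow> m j = 0"
  using ip unfolding IP_lattice_simplex_def affinely_indep_def by blast

definition lam :: "nat \<Rightarrow> rat" where
  "lam = (SOME l. (\<forall>j\<le>d. l j \<ge> 0) \<and> (\<Sum>j\<le>d. l j) = 1 \<and>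
      (\<forall>i<d. (0::rat) = (\<Sum>j\<le>d. l j * of_int (v j i))))"

lemma lam: "\<forall>j\<le>d. lam j \<ge> 0" "(\<Sum>j\<le>d. lam j) = 1" "\<And>i. i<d \<Longrightarrow> (\<Sum>j\<le>d. lam j * of_int (v j i)) = 0"
proof -
  obtain e :: rat where "e > 0" "\<forall>x. (\<forall>i<d. \<bar>x i\<bar> < e) \<longrightarrow> in_conv d v x"
    using ip unfolding IP_lattice_simplex_def origin_in_interior_def by blast
  then have "in_conv d v (\<lambda>_. 0)" by auto
  then have ex: "\<exists>l. (\<forall>j\<le>d. l j \<ge> 0) \<and> (\<Sum>j\<le>d. l j) = 1 \<and>
      (\<forall>i<d. (0::rat) = (\<Sum>j\<le>d. l j * of_int (v j i)))" unfolding in_conv_def by auto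
  show "\<forall>j\<le>d. lam j \<ge> 0" "(\<Sum>j\<le>d. lam j) = 1" "\<And>i. i<d \<Longrightarrow> (\<Sum>j\<le>d. lam j * of_int (v j i)) = 0"
    using someI_ex[OF ex] unfolding lam_def by auto
qed

lemma uniq:
  assumes "\<forall>i<d. (\<Sum>j\<le>d. m j * of_int (v j i)) = 0" "j \<le> d"
  shows "m j = (\<Sum>j\<le>d. m j) * lam j"
proof -
  define S where "S = (\<Sum>j\<le>d. m j)"
  define m' where "m' j = m j - S * lam j" for j
  have "(\<Sum>j\<le>d. m' j) = 0" unfolding m'_def S_def
    by (simp add: sum_subtractf sum_distrib_left[symmetric] lam(2))
  moreover have "\<forall>i<d. (\<Sum>j\<le>d. m' j * of_int (v j i)) = 0"
  proof (intro allI impI)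
    fix i assume i: "i < d"
    have "(\<Sum>j\<le>d. m' j * of_int (v j i)) = (\<Sum>j\<le>d. m j * of_int (v j i)) - S * (\<Sum>j\<le>d. lam j * of_int (v j i))"
      unfolding m'_def by (simp add: algebra_simps sum_subtractf sum_distrib_left)
    then show "(\<Sum>j\<le>d. m' j * of_int (v j i)) = 0" using assms(1) lam(3) i by simp
  qed
  ultimately have "m' j = 0" using aff assms(2) by blast
  then show ?thesis unfolding m'_def S_def by simp
qed

lemma lam_pos: assumes k: "k \<le> d" shows "lam k > 0"
proof -
  obtain e :: rat where e: "e > 0" "\<forall>x. (\<forall>i<d. \<bar>x i\<bar> < e) \<longrightarrow> in_conv d v x"
    using ip unfolding IP_lattice_simplex_def origin_in_interior_def by blast
  define B where "B = (\<Sum>i<d. \<bar>of_int (v k i) :: rat\<bar>)"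
  have B0: "B \<ge> 0" unfolding B_def by (simp add: sum_nonneg)
  define t where "t = e / (1 + B)"
  have t0: "t > 0" unfolding t_def using e B0 by simp
  define x where "x i = - t * of_int (v k i)" for i
  have "\<forall>i<d. \<bar>x i\<bar> < e"
  proof (intro allI impI)
    fix i assume i: "i < d"
    have "\<bar>of_int (v k i) :: rat\<bar> \<le> B" unfolding B_def
      by (rule member_le_sum) (use i in auto)
    then have "\<bar>x i\<bar> \<le> t * B" unfolding x_def using t0 by (simp add: abs_mult)
    also have "\<dots> < t * (1 + B)" using t0 by simp
    also have "\<dots> = e" unfolding t_def using B0 by simp
    finally show "\<bar>x i\<bar> < e" .
  qed
  then have "in_conv d v x" using e by auto
  then obtain mu where mu: "\<forall>j\<le>d. mu j \<ge> 0" "(\<Sum>j\<le>d. mu j) = 1"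
    "\<forall>i<d. x i = (\<Sum>j\<le>d. mu j * of_int (v j i))" unfolding in_conv_def by blast
  define m where "m j = mu j + (if j = k then t else 0)" for j
  have sm: "(\<Sum>j\<le>d. m j) = 1 + t" unfolding m_def using mu(2) k by (simp add: sum.distrib)
  have "\<forall>i<d. (\<Sum>j\<le>d. m j * of_int (v j i)) = 0"
  proof (intro allI impI)
    fix i assume i: "i < d"
    have "(\<Sum>j\<le>d. m j * of_int (v j i)) = (\<Sum>j\<le>d. mu j * of_int (v j i)) + t * of_int (v k i)"
    proof -
      have "\<And>j. m j * of_int (v j i) = mu j * of_int (v j i) + (if j = k then t * of_int (v k i) else 0)"
        unfolding m_def by (auto simp: algebra_simps)
      then show ?thesis using k by (simp add: sum.distrib)
    qed
    moreover have "x i = (\<Sum>j\<le>d. mu j * of_int (v j i))" using mu(3) i by auto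
    ultimately show "(\<Sum>j\<le>d. m j * of_int (v j i)) = 0" unfolding x_def by simp
  qed
  from uniq[OF this k] sm have "m k = (1 + t) * lam k" by simp
  moreover have "m k \<ge> t" unfolding m_def using mu(1) k by simp
  ultimately have "(1 + t) * lam k > 0" using t0 by simp
  then show ?thesis using t0 by (simp add: zero_less_mult_iff)
qed

definition Wm :: "nat \<Rightarrow> int mat" where
  "Wm k = mat d d (\<lambda>(r, c). v (ins k c) r)"

lemma Wm_carrier: "Wm k \<in> carrier_mat d d" unfolding Wm_def by simp

lemma det_Wm_nz: assumes k: "k \<le> d" shows "det (Wm k) \<noteq> 0"
proof
  assume "det (Wm k) = 0"
  then obtain x where x: "x \<in> carrier_vec d" "x \<noteq> 0\<^sub>v d" "Wm k *\<^sub>v x = 0\<^sub>v d"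
    using det_0_iff_vec_prod_zero[OF Wm_carrier] by blast
  define m :: "nat \<Rightarrow> rat" where "m j = (if j = k then 0 else of_int (x $ (if j < k then j else j - 1)))" for j
  have mi: "m (ins k c) = of_int (x $ c)" for c unfolding m_def ins_def by auto
  have rel: "\<forall>i<d. (\<Sum>j\<le>d. m j * of_int (v j i)) = 0"
  proof (intro allI impI)
    fix i assume i: "i < d"
    have "(\<Sum>j\<le>d. m j * of_int (v j i)) = (\<Sum>c<d. of_int (x $ c) * of_int (v (ins k c) i))"
      using sum_ins[OF k, of "\<lambda>j. m j * of_int (v j i)"] mi by (simp add: m_def)
    also have "\<dots> = of_int (\<Sum>c<d. v (ins k c) i * x $ c)" by (simp add: algebra_simps)
    also have "(\<Sum>c<d. v (ins k c) i * x $ c) = (Wm k *\<^sub>v x) $ i"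
      using i x(1) unfolding Wm_def by (auto simp: scalar_prod_def atLeast0LessThan)
    also have "\<dots> = 0" using x(3) i by simp
    finally show "(\<Sum>j\<le>d. m j * of_int (v j i)) = 0" by simp
  qed
  have "m k = 0" unfolding m_def by simp
  then have S0: "(\<Sum>j\<le>d. m j) = 0" using uniq[OF rel k] lam_pos[OF k] by simp
  have "x = 0\<^sub>v d"
  proof (rule eq_vecI)
    fix c assume c: "c < dim_vec (0\<^sub>v d :: int vec)"
    have "ins k c \<le> d" using c unfolding ins_def by auto
    then have "m (ins k c) = 0" using uniq[OF rel] S0 by simp
    then show "x $ c = 0\<^sub>v d $ c" using mi c by simp
  qed (use x in auto)
  then show False using x(2) by simp
qed


lemma cof_rel: assumes i: "i < d" shows "(\<Sum>j\<le>d. (-1)^j * det (Wm j) * v j i) = 0"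
proof -
  define B where "B = mat (Suc d) (Suc d) (\<lambda>(r,c). if r = 0 then v c i else v c (r - 1))"
  have Bc: "B \<in> carrier_mat (Suc d) (Suc d)" unfolding B_def by simp
  have "row B 0 = row B (Suc i)" unfolding B_def using i by (intro eq_vecI) auto
  then have "det B = 0" using det_identical_rows[OF Bc, of 0 "Suc i"] i by auto
  moreover have "det B = (\<Sum>j<Suc d. B $$ (0,j) * cofactor B 0 j)"
    using laplace_expansion_row[OF Bc, of 0] by simp
  moreover have "mat_delete B 0 j = Wm j" for j
    unfolding mat_delete_def B_def Wm_def ins_def by (rule eq_matI) auto
  ultimately have "(\<Sum>j<Suc d. v j i * ((-1)^j * det (Wm j))) = 0"
    unfolding cofactor_def B_def by simp
  then show ?thesis unfolding lessThan_Suc_atMost by (simp add: algebra_simps)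
qed

definition cc :: "nat \<Rightarrow> rat" where "cc j = of_int ((-1)^j * det (Wm j))"
definition Wt :: rat where "Wt = \<bar>\<Sum>j\<le>d. cc j\<bar>"

lemma cc_rel: "cc j = (\<Sum>j\<le>d. cc j) * lam j" if "j \<le> d"
proof (rule uniq[OF _ that], intro allI impI)
  fix i assume "i < d"
  then have "of_int (\<Sum>j\<le>d. (-1)^j * det (Wm j) * v j i) = (0::rat)" using cof_rel by simp
  then show "(\<Sum>j\<le>d. cc j * of_int (v j i)) = 0" unfolding cc_def by simp
qed

lemma Wt_pos: "Wt > 0"
proof -
  have "cc d \<noteq> 0" unfolding cc_def using det_Wm_nz[of d] by simp
  then have "(\<Sum>j\<le>d. cc j) \<noteq> 0" using cc_rel[of d] by auto
  then show ?thesis unfolding Wt_def by simp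
qed

lemma weight_eq: "weight d v j = nat \<bar>det (Wm j)\<bar>"
  unfolding weight_def Wm_def ins_def by simp

lemma weight_rat: assumes "j \<le> d" shows "of_nat (weight d v j) = Wt * lam j"
proof -
  have "of_nat (weight d v j) = \<bar>cc j\<bar>" unfolding weight_eq cc_def by (simp add: abs_mult)
  also have "\<dots> = Wt * lam j" using cc_rel[OF assms] lam(1) assms unfolding Wt_def
    by (simp add: abs_mult)
  finally show ?thesis .
qed

lemma total_rat: "of_nat (total_weight d v) = Wt"
proof -
  have "of_nat (total_weight d v) = (\<Sum>j\<le>d. Wt * lam j)"
    unfolding total_weight_def by (simp add: weight_rat)
  also have "\<dots> = Wt" by (simp add: sum_distrib_left[symmetric] lam(2))
  finally show ?thesis .
qed

lemma weight_pos: "j \<le> d \<Longrightarrow> weight d v j > 0"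
  using weight_rat[of j] Wt_pos lam_pos[of j] by (metis of_nat_0_less_iff zero_less_mult_iff)

end

lemma smult_one_mult_vec: "x \<in> carrier_vec n \<Longrightarrow> (c \<cdot>\<^sub>m 1\<^sub>m n) *\<^sub>v x = c \<cdot>\<^sub>v (x :: 'a :: comm_ring_1 vec)"
proof (rule eq_vecI)
  fix i assume x: "x \<in> carrier_vec n" and i: "i < dim_vec (c \<cdot>\<^sub>v x)"
  then have i': "i < n" by simp
  have "((c \<cdot>\<^sub>m 1\<^sub>m n) *\<^sub>v x) $ i = (\<Sum>j\<in>{0..<n}. (if i = j then c else 0) * x $ j)"
    using x i' by (auto simp: scalar_prod_def intro!: sum.cong)
  also have "\<dots> = (\<Sum>j\<in>{0..<n}. if i = j then c * x $ j else 0)" by (rule sum.cong) auto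
  also have "\<dots> = c * x $ i" using i' by simp
  finally show "((c \<cdot>\<^sub>m 1\<^sub>m n) *\<^sub>v x) $ i = (c \<cdot>\<^sub>v x) $ i" using i' x by simp
qed simp

context ip begin

definition Am :: "nat \<Rightarrow> rat mat" where
  "Am k = mat d d (\<lambda>(r,i). of_int (v (ins k r) i))"

lemma Am_carrier: "Am k \<in> carrier_mat d d" unfolding Am_def by simp

lemma det_Am: assumes "k \<le> d" shows "det (Am k) \<noteq> 0"
proof -
  have "Am k = transpose_mat (map_mat of_int (Wm k))"
    unfolding Am_def Wm_def by (rule eq_matI) auto
  then have "det (Am k) = of_int (det (Wm k))"
    using det_transpose[of "map_mat rat_of_int (Wm k)" d] Wm_carrier by simp
  then show ?thesis using det_Wm_nz[OF assms] by simp
qed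

lemma Am_row: assumes "k \<le> d" "j \<le> d" "j \<noteq> k"
  shows "\<exists>r<d. ins k r = j \<and> (\<forall>y. y \<in> carrier_vec d \<longrightarrow> (Am k *\<^sub>v y) $ r = (\<Sum>i<d. y $ i * of_int (v j i)))"
proof -
  define r where "r = (if j < k then j else j - 1)"
  have r: "r < d" "ins k r = j" using assms unfolding r_def ins_def by auto
  show ?thesis
  proof (intro exI[of _ r] conjI allI impI r)
    fix y :: "rat vec" assume "y \<in> carrier_vec d"
    then show "(Am k *\<^sub>v y) $ r = (\<Sum>i<d. y $ i * of_int (v j i))"
      using r unfolding Am_def by (auto simp: scalar_prod_def atLeast0LessThan algebra_simps)
  qed
qed

lemma dual_ex: assumes k: "k \<le> d"
  shows "\<exists>!u::nat\<Rightarrow>rat. (\<forall>i\<ge>d. u i = 0) \<and> (\<forall>j\<le>d. j \<noteq> k \<longrightarrow> (\<Sum>i<d. u i * of_int (v j i)) = -1)"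
proof -
  let ?A = "Am k"
  have Ac: "?A \<in> carrier_mat d d" by (rule Am_carrier)
  have dA: "det ?A \<noteq> 0" by (rule det_Am[OF k])
  have adj: "adj_mat ?A \<in> carrier_mat d d" "?A * adj_mat ?A = det ?A \<cdot>\<^sub>m 1\<^sub>m d"
    "adj_mat ?A * ?A = det ?A \<cdot>\<^sub>m 1\<^sub>m d" using adj_mat[OF Ac] by auto
  define b where "b = vec d (\<lambda>_. - 1 / det ?A)"
  define y where "y = adj_mat ?A *\<^sub>v b"
  have yc: "y \<in> carrier_vec d" unfolding y_def b_def using adj by simp
  have Ay: "?A *\<^sub>v y = det ?A \<cdot>\<^sub>v b" unfolding y_def
    using assoc_mult_mat_vec[of ?A d d "adj_mat ?A" d b, symmetric] adj Ac
      smult_one_mult_vec[of b d "det ?A"] by (simp add: b_def)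
  define u where "u i = (if i < d then y $ i else 0)" for i
  have P: "(\<forall>i\<ge>d. u i = 0) \<and> (\<forall>j\<le>d. j \<noteq> k \<longrightarrow> (\<Sum>i<d. u i * of_int (v j i)) = -1)"
  proof (intro conjI allI impI)
    fix j assume j: "j \<le> d" "j \<noteq> k"
    obtain r where r: "r < d" "ins k r = j" "(?A *\<^sub>v y) $ r = (\<Sum>i<d. y $ i * of_int (v j i))"
      using Am_row[OF k j] yc by blast
    have "(\<Sum>i<d. u i * of_int (v j i)) = (\<Sum>i<d. y $ i * of_int (v j i))"
      unfolding u_def by simp
    also have "\<dots> = -1" using r(3) Ay r(1) dA unfolding b_def by simp
    finally show "(\<Sum>i<d. u i * of_int (v j i)) = -1" .
  qed (simp add: u_def)
  show ?thesis
  proof (rule ex1I[of _ u])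
    show "(\<forall>i\<ge>d. u i = 0) \<and> (\<forall>j\<le>d. j \<noteq> k \<longrightarrow> (\<Sum>i<d. u i * of_int (v j i)) = -1)" by (rule P)
  next
    fix u' :: "nat \<Rightarrow> rat" assume u': "(\<forall>i\<ge>d. u' i = 0) \<and> (\<forall>j\<le>d. j \<noteq> k \<longrightarrow> (\<Sum>i<d. u' i * of_int (v j i)) = -1)"
    define z where "z = vec d (\<lambda>i. u' i - u i)"
    have zc: "z \<in> carrier_vec d" unfolding z_def by simp
    have Az: "?A *\<^sub>v z = 0\<^sub>v d"
    proof (rule eq_vecI)
      fix r assume "r < dim_vec (0\<^sub>v d :: rat vec)"
      then have r: "r < d" by simp
      have j: "ins k r \<le> d" "ins k r \<noteq> k" using r unfolding ins_def by auto
      have "(?A *\<^sub>v z) $ r = (\<Sum>i<d. (u' i - u i) * of_int (v (ins k r) i))"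
        using r unfolding Am_def z_def by (auto simp: scalar_prod_def atLeast0LessThan algebra_simps)
      also have "\<dots> = (\<Sum>i<d. u' i * of_int (v (ins k r) i)) - (\<Sum>i<d. u i * of_int (v (ins k r) i))"
        by (simp add: algebra_simps sum_subtractf)
      also have "\<dots> = 0" using u' P j by simp
      finally show "(?A *\<^sub>v z) $ r = 0\<^sub>v d $ r" using r by simp
    qed (simp add: Am_def)
    have "det ?A \<cdot>\<^sub>v z = adj_mat ?A *\<^sub>v (?A *\<^sub>v z)"
      using assoc_mult_mat_vec[of "adj_mat ?A" d d ?A d z] adj Ac zc smult_one_mult_vec[OF zc] by simp
    also have "\<dots> = 0\<^sub>v d" unfolding Az using adj by auto
    finally have "det ?A \<cdot>\<^sub>v z = 0\<^sub>v d" .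
    then have "z $ i = 0" if "i < d" for i using that dA
      by (metis index_smult_vec(1) index_zero_vec(1) mult_eq_0_iff zc carrier_vecD)
    then show "u' = u" using u' unfolding z_def u_def by (intro ext) (auto simp: not_less)
  qed
qed

definition uu :: "nat \<Rightarrow> nat \<Rightarrow> rat" where "uu k = dual_vertex d v k"

lemma uu: assumes "k \<le> d"
  shows "\<And>i. i \<ge> d \<Longrightarrow> uu k i = 0" "\<And>j. j \<le> d \<Longrightarrow> j \<noteq> k \<Longrightarrow> (\<Sum>i<d. uu k i * of_int (v j i)) = -1"
  using theI'[OF dual_ex[OF assms]] unfolding uu_def dual_vertex_def by auto

end



lemma denom_ex:
  fixes m :: nat and f :: "nat \<Rightarrow> rat"
  shows "\<exists>g::nat. g \<ge> 1 \<and> (\<forall>i<m. of_nat g * f i \<in> \<int>)"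
proof (induction m)
  case 0 then show ?case by (intro exI[of _ 1]) auto
next
  case (Suc m)
  then obtain g :: nat where g: "g \<ge> 1" "\<forall>i<m. of_nat g * f i \<in> \<int>" by auto
  obtain p q where pq: "quotient_of (f m) = (p, q)" by (cases "quotient_of (f m)")
  have q: "q > 0" using quotient_of_denom_pos[OF pq] .
  have fm: "f m = of_int p / of_int q" using quotient_of_div[OF pq] .
  show ?case
  proof (intro exI[of _ "g * nat q"] conjI allI impI)
    show "g * nat q \<ge> 1" using g q by (simp add: Suc_leI)
  next
    fix i assume i: "i < Suc m"
    have e: "of_nat (g * nat q) * f i = of_int q * (of_nat g * f i)" using q by simp
    show "of_nat (g * nat q) * f i \<in> \<int>"
    proof (cases "i = m")
      case True
      have "of_int q * f m = of_int p" using fm q by simp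
      moreover have "of_nat (g * nat q) * f i = of_nat g * (of_int q * f m)" using True q by simp
      ultimately have e: "of_nat (g * nat q) * f i = of_nat g * of_int p" by simp
      have "(of_nat g :: rat) * of_int p \<in> \<int>" by (intro Ints_mult) auto
      then show ?thesis by (simp only: e)
    next
      case False
      then have "of_nat g * f i \<in> \<int>" using g i by auto
      then show ?thesis unfolding e by simp
    qed
  qed
qed

context ip begin

lemma uu_vk: assumes k: "k \<le> d"
  shows "lam k * (\<Sum>i<d. uu k i * of_int (v k i)) = 1 - lam k"
proof -
  have "0 = (\<Sum>i<d. uu k i * (\<Sum>j\<le>d. lam j * of_int (v j i)))" using lam(3) by simp
  also have "\<dots> = (\<Sum>j\<le>d. lam j * (\<Sum>i<d. uu k i * of_int (v j i)))"
    by (simp add: sum_distrib_left sum.swap[of _ "{..<d}"] algebra_simps)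
  also have "\<dots> = lam k * (\<Sum>i<d. uu k i * of_int (v k i)) + (\<Sum>j\<in>{..d}-{k}. lam j * (\<Sum>i<d. uu k i * of_int (v j i)))"
    using k by (simp add: sum.remove)
  also have "(\<Sum>j\<in>{..d}-{k}. lam j * (\<Sum>i<d. uu k i * of_int (v j i))) = (\<Sum>j\<in>{..d}-{k}. - lam j)"
    using uu(2)[OF k] by (intro sum.cong) auto
  also have "\<dots> = - (1 - lam k)"
    using lam(2) k by (simp add: sum.remove sum_negf)
  finally show ?thesis by simp
qed

lemma lgi: assumes "k \<le> d"
  shows "local_gorenstein_index d v k \<ge> 1" "\<And>i. i < d \<Longrightarrow> of_nat (local_gorenstein_index d v k) * uu k i \<in> \<int>"
proof -
  have ex: "\<exists>g::nat. g \<ge> 1 \<and> (\<forall>i<d. of_nat g * dual_vertex d v k i \<in> \<int>)" by (rule denom_ex)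
  show "local_gorenstein_index d v k \<ge> 1" "\<And>i. i < d \<Longrightarrow> of_nat (local_gorenstein_index d v k) * uu k i \<in> \<int>"
    using LeastI_ex[OF ex] unfolding local_gorenstein_index_def uu_def by auto
qed

abbreviation gg where "gg \<equiv> gorenstein_index d v"

lemma gg_pos: "gg \<ge> 1"
proof -
  have "0 \<notin> local_gorenstein_index d v ` {..d}" using lgi(1) by fastforce
  then have "gg \<noteq> 0" unfolding gorenstein_index_def using Lcm_0_iff_nat[of "local_gorenstein_index d v ` {..d}"] by auto
  then show ?thesis by simp
qed

lemma gg_int: assumes k: "k \<le> d" and i: "i < d" shows "of_nat gg * uu k i \<in> \<int>"
proof -
  have "local_gorenstein_index d v k dvd gg" unfolding gorenstein_index_def
    by (rule dvd_Lcm) (use k in auto)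
  then obtain t where t: "gg = local_gorenstein_index d v k * t" by (auto elim: dvdE)
  have "(of_nat gg :: rat) = of_nat t * of_nat (local_gorenstein_index d v k)"
    unfolding t by (metis of_nat_mult mult.commute)
  then have e: "of_nat gg * uu k i = of_nat t * (of_nat (local_gorenstein_index d v k) * uu k i)"
    by (metis mult.assoc)
  have "of_nat t * (of_nat (local_gorenstein_index d v k) * uu k i) \<in> \<int>"
    by (rule Ints_mult) (use lgi(2)[OF k i] in auto)
  then show ?thesis by (simp only: e)
qed

lemma N_eq: assumes k: "k \<le> d"
  shows "of_nat gg / lam k = (\<Sum>i<d. (of_nat gg * uu k i) * of_int (v k i)) + of_nat gg"
proof -
  have lk: "lam k \<noteq> 0" using lam_pos[OF k] by simp
  have "(\<Sum>i<d. uu k i * of_int (v k i)) = 1 / lam k - 1" using uu_vk[OF k] lk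
    by (simp add: field_simps)
  then have "(\<Sum>i<d. (of_nat gg * uu k i) * of_int (v k i)) = of_nat gg * (1 / lam k - 1)"
    by (simp add: sum_distrib_left[symmetric] mult.assoc)
  then show ?thesis by (simp add: algebra_simps)
qed

lemma N_int: assumes k: "k \<le> d" shows "of_nat gg / lam k \<in> \<int>"
proof -
  have "\<And>i. i \<in> {..<d} \<Longrightarrow> (of_nat gg * uu k i) * of_int (v k i) \<in> \<int>"
    by (rule Ints_mult) (use gg_int[OF k] in auto)
  then show ?thesis unfolding N_eq[OF k] by (intro Ints_add Ints_sum) auto
qed

lemma alpha_rat: assumes k: "k \<le> d"
  shows "of_nat (alpha d v k) = of_nat gg / lam k" "alpha d v k > 0"
proof -
  obtain N :: int where N: "of_int N = of_nat gg / lam k" using N_int[OF k] by (auto elim: Ints_cases)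
  have pos: "of_nat gg / lam k > 0" using gg_pos lam_pos[OF k] by simp
  then have N0: "N > 0" using N by (metis of_int_0_less_iff)
  define n where "n = nat N"
  have n: "(of_nat n :: rat) = of_nat gg / lam k" unfolding n_def using N N0 by simp
  have "(of_nat (gg * total_weight d v) :: rat) = of_nat (n * weight d v k)"
    using n weight_rat[OF k] total_rat lam_pos[OF k] by simp
  then have e: "gg * total_weight d v = n * weight d v k" by (simp only: of_nat_eq_iff)
  have "alpha d v k = n" unfolding alpha_def e using weight_pos[OF k] by simp
  then show "of_nat (alpha d v k) = of_nat gg / lam k" "alpha d v k > 0" using n N0 unfolding n_def by auto
qed

abbreviation LL where "LL \<equiv> Lcm (alpha d v ` {..d})"

lemma wvec_rat: assumes j: "j \<le> d"
  shows "of_nat (wvec d v j) = of_nat LL * lam j / of_nat gg"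
proof -
  have "alpha d v j dvd LL" by (rule dvd_Lcm) (use j in auto)
  then obtain t where t: "LL = alpha d v j * t" by (auto elim: dvdE)
  have "wvec d v j = t" unfolding wvec_def t using alpha_rat(2)[OF j] by simp
  moreover have "(of_nat LL :: rat) = of_nat gg / lam j * of_nat t" unfolding t using alpha_rat(1)[OF j] by simp
  ultimately show ?thesis using lam_pos[OF j] gg_pos by (simp add: field_simps)
qed

lemma w_rel: assumes i: "i < d" shows "(\<Sum>j\<le>d. int (wvec d v j) * v j i) = 0"
proof -
  have "(of_int (\<Sum>j\<le>d. int (wvec d v j) * v j i) :: rat) = (\<Sum>j\<le>d. (of_nat LL / of_nat gg) * (lam j * of_int (v j i)))"
  proof -
    have "(of_int (\<Sum>j\<le>d. int (wvec d v j) * v j i) :: rat) = (\<Sum>j\<le>d. of_nat (wvec d v j) * of_int (v j i))"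
      by simp
    also have "\<dots> = (\<Sum>j\<le>d. (of_nat LL / of_nat gg) * (lam j * of_int (v j i)))"
      by (rule sum.cong) (auto simp: wvec_rat)
    finally show ?thesis .
  qed
  also have "\<dots> = (of_nat LL / of_nat gg) * (\<Sum>j\<le>d. lam j * of_int (v j i))" by (simp only: sum_distrib_left)
  also have "\<dots> = 0" using lam(3)[OF i] by simp
  finally have "(of_int (\<Sum>j\<le>d. int (wvec d v j) * v j i) :: rat) = 0" .
  then show ?thesis by (simp only: of_int_eq_0_iff)
qed

end



lemma of_int_floor_Ints: "(x::rat) \<in> \<int> \<Longrightarrow> of_int \<lfloor>x\<rfloor> = x"
  by (metis Ints_cases floor_of_int)

context ip begin

lemma sum_single:
  fixes f :: "nat \<Rightarrow> int"
  assumes "j < d" "\<And>i. i < d \<Longrightarrow> i \<noteq> j \<Longrightarrow> f i = 0"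
  shows "(\<Sum>i<d. f i) = f j"
proof -
  have "(\<Sum>i<d. f i) = f j + (\<Sum>i\<in>{..<d}-{j}. f i)" using assms(1) by (simp add: sum.remove)
  also have "(\<Sum>i\<in>{..<d}-{j}. f i) = 0" using assms(2) by (intro sum.neutral) auto
  finally show ?thesis by simp
qed

lemma main_ip:
  "\<exists>(\<sigma> :: nat \<Rightarrow> nat) (U :: int mat) (P :: nat \<Rightarrow> nat \<Rightarrow> int).
     \<sigma> permutes {..d} \<and>
     U \<in> carrier_mat d d \<and> (det U = 1 \<or> det U = -1) \<and>
     (\<forall>j\<le>d. \<forall>i<d. P i j = (\<Sum>l<d. U $$ (i, l) * v (\<sigma> j) l)) \<and>
     (\<forall>i<d. \<forall>j<d. j < i \<longrightarrow> P i j = 0) \<and>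
     (\<forall>k<d. P k k \<ge> 1 \<and> P k k dvd int (alpha d (v \<circ> \<sigma>) k)) \<and>
     (\<forall>k<d. \<forall>i<k. 0 \<le> P i k \<and> P i k < P k k) \<and>
     (\<forall>k<d. - P k d * int (wvec d (v \<circ> \<sigma>) d) =
              (\<Sum>j\<in>{k..<d}. P k j * int (wvec d (v \<circ> \<sigma>) j)))"
proof -
  obtain U where U: "U \<in> carrier_mat d d" "det U = 1 \<or> det U = -1"
    "\<forall>i<d. \<forall>j<i. (U * Wm d) $$ (i,j) = 0" "\<forall>k<d. (U * Wm d) $$ (k,k) \<ge> 1"
    "\<forall>k<d. \<forall>i<k. 0 \<le> (U * Wm d) $$ (i,k) \<and> (U * Wm d) $$ (i,k) < (U * Wm d) $$ (k,k)"
    using hnf_exists[OF Wm_carrier det_Wm_nz[of d]] by auto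
  define P where "P i j = (\<Sum>l<d. U $$ (i, l) * v j l)" for i j
  have PH: "P i j = (U * Wm d) $$ (i,j)" if "i < d" "j < d" for i j
    using that U(1) unfolding P_def Wm_def ins_def
    by (auto simp: scalar_prod_def atLeast0LessThan intro!: sum.cong)
  have tri: "\<forall>i<d. \<forall>j<d. j < i \<longrightarrow> P i j = 0" using PH U(3) by auto
  have diag: "\<forall>k<d. P k k \<ge> 1" using PH U(4) by auto
  have red: "\<forall>k<d. \<forall>i<k. 0 \<le> P i k \<and> P i k < P k k" using PH U(5) by auto
  have dU: "det U * det U = 1" using U(2) by auto
  define Uinv where "Uinv = det U \<cdot>\<^sub>m adj_mat U"
  have Uinvc: "Uinv \<in> carrier_mat d d" unfolding Uinv_def using adj_mat(1)[OF U(1)] by simp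
  have UinvU: "Uinv * U = 1\<^sub>m d"
  proof -
    have "Uinv * U = det U \<cdot>\<^sub>m (adj_mat U * U)" unfolding Uinv_def
      using mult_smult_assoc_mat[OF adj_mat(1)[OF U(1)] U(1)] by simp
    also have "\<dots> = det U \<cdot>\<^sub>m (det U \<cdot>\<^sub>m 1\<^sub>m d)" using adj_mat(3)[OF U(1)] by simp
    also have "\<dots> = 1\<^sub>m d" using dU by (intro eq_matI) auto
    finally show ?thesis .
  qed
  have divs: "P k k dvd int (alpha d v k)" if k: "k < d" for k
  proof -
    have kd: "k \<le> d" using k by simp
    define F where "F = vec d (\<lambda>l. \<lfloor>of_nat gg * uu k l - of_nat gg * uu d l\<rfloor>)"
    have Fc: "F \<in> carrier_vec d" unfolding F_def by simp
    have Fe: "of_int (F $ l) = of_nat gg * uu k l - of_nat gg * uu d l" if "l < d" for l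
      unfolding F_def using that gg_int[OF kd that] gg_int[of d l] that
      by (simp add: of_int_floor_Ints Ints_diff)
    have hF: "(of_int (\<Sum>l<d. F $ l * v j l) :: rat) =
        of_nat gg * (\<Sum>l<d. uu k l * of_int (v j l)) - of_nat gg * (\<Sum>l<d. uu d l * of_int (v j l))" for j
    proof -
      have "(of_int (\<Sum>l<d. F $ l * v j l) :: rat) = (\<Sum>l<d. (of_nat gg * uu k l - of_nat gg * uu d l) * of_int (v j l))"
        by (simp add: Fe)
      then show ?thesis by (simp add: sum_distrib_left algebra_simps sum_subtractf)
    qed
    define G where "G = transpose_mat Uinv *\<^sub>v F"
    have Gc: "G \<in> carrier_vec d" unfolding G_def F_def using Uinvc by simp
    have UG: "transpose_mat U *\<^sub>v G = F"
    proof -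
      have "transpose_mat U *\<^sub>v G = (transpose_mat U * transpose_mat Uinv) *\<^sub>v F"
        unfolding G_def using assoc_mult_mat_vec[of "transpose_mat U" d d "transpose_mat Uinv" d F] U(1) Uinvc Fc
        by simp
      also have "transpose_mat U * transpose_mat Uinv = transpose_mat (Uinv * U)"
        using transpose_mult[OF Uinvc U(1)] by simp
      also have "\<dots> = 1\<^sub>m d" unfolding UinvU by simp
      finally show ?thesis using Fc by simp
    qed
    have GP: "(\<Sum>i<d. G $ i * P i j) = (\<Sum>l<d. F $ l * v j l)" for j
    proof -
      have "(\<Sum>i<d. G $ i * P i j) = (\<Sum>i<d. \<Sum>l<d. G $ i * U $$ (i,l) * v j l)"
        unfolding P_def by (simp add: sum_distrib_left mult.assoc)
      also have "\<dots> = (\<Sum>l<d. \<Sum>i<d. G $ i * U $$ (i,l) * v j l)" by (rule sum.swap)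
      also have "\<dots> = (\<Sum>l<d. (\<Sum>i<d. U $$ (i,l) * G $ i) * v j l)"
        by (intro sum.cong refl) (simp add: sum_distrib_right sum_distrib_left ac_simps)
      also have "\<dots> = (\<Sum>l<d. (transpose_mat U *\<^sub>v G) $ l * v j l)"
        using U(1) Gc by (intro sum.cong) (auto simp: scalar_prod_def atLeast0LessThan)
      finally show ?thesis unfolding UG .
    qed
    have Gz: "\<forall>j<k. G $ j = 0"
    proof (intro allI impI)
      fix j assume "j < k"
      then show "G $ j = 0"
      proof (induction j rule: less_induct)
        case (less j)
        have jd: "j < d" using less k by simp
        have "(\<Sum>i<d. G $ i * P i j) = G $ j * P j j"
        proof (rule sum_single[OF jd])
          fix i assume "i < d" "i \<noteq> j"
          then show "G $ i * P i j = 0" using less tri jd by (cases "i < j") auto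
        qed
        moreover have "(of_int (\<Sum>l<d. F $ l * v j l) :: rat) = 0"
          unfolding hF using uu(2)[OF kd, of j] uu(2)[of d j] less jd by simp
        ultimately have "G $ j * P j j = 0" using GP by simp
        then show ?case using diag jd by (metis mult_eq_0_iff not_one_le_zero)
      qed
    qed
    have "(\<Sum>i<d. G $ i * P i k) = G $ k * P k k"
    proof (rule sum_single[OF k])
      fix i assume "i < d" "i \<noteq> k"
      then show "G $ i * P i k = 0" using Gz tri k by (cases "i < k") auto
    qed
    moreover have "(of_int (\<Sum>l<d. F $ l * v k l) :: rat) = of_nat (alpha d v k)"
      unfolding hF alpha_rat(1)[OF kd] N_eq[OF kd] using uu(2)[of d k] k
      by (simp add: sum_distrib_left mult.assoc)
    ultimately have "G $ k * P k k = int (alpha d v k)" using GP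
      by (metis of_int_eq_iff of_int_of_nat_eq)
    then show ?thesis by (metis dvd_triv_right)
  qed
  have iii: "- P k d * int (wvec d v d) = (\<Sum>j\<in>{k..<d}. P k j * int (wvec d v j))" if k: "k < d" for k
  proof -
    have "(\<Sum>j\<le>d. P k j * int (wvec d v j)) = (\<Sum>j\<le>d. \<Sum>l<d. U $$ (k,l) * (int (wvec d v j) * v j l))"
      unfolding P_def by (simp add: sum_distrib_right sum_distrib_left ac_simps)
    also have "\<dots> = (\<Sum>l<d. \<Sum>j\<le>d. U $$ (k,l) * (int (wvec d v j) * v j l))" by (rule sum.swap)
    also have "\<dots> = (\<Sum>l<d. U $$ (k,l) * (\<Sum>j\<le>d. int (wvec d v j) * v j l))"
      by (simp add: sum_distrib_left)
    also have "\<dots> = 0" using w_rel by simp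
    finally have z: "(\<Sum>j\<le>d. P k j * int (wvec d v j)) = 0" .
    have "(\<Sum>j\<le>d. P k j * int (wvec d v j)) = (\<Sum>j<d. P k j * int (wvec d v j)) + P k d * int (wvec d v d)"
      by (simp add: lessThan_Suc_atMost[symmetric])
    also have "(\<Sum>j<d. P k j * int (wvec d v j)) = (\<Sum>j\<in>{0..<k}. P k j * int (wvec d v j)) + (\<Sum>j\<in>{k..<d}. P k j * int (wvec d v j))"
      using sum.atLeastLessThan_concat[of 0 k d "\<lambda>j. P k j * int (wvec d v j)"] k by (simp add: atLeast0LessThan)
    also have "(\<Sum>j\<in>{0..<k}. P k j * int (wvec d v j)) = 0" using tri k by (intro sum.neutral) auto
    finally show ?thesis using z by simp
  qed
  have Pd: "\<forall>j\<le>d. \<forall>i<d. P i j = (\<Sum>l<d. U $$ (i, l) * v j l)" by (simp add: P_def)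
  have perm: "id permutes {..d}" by (rule permutes_id)
  have e1: "v \<circ> id = v" by simp
  have dd: "\<forall>k<d. P k k \<ge> 1 \<and> P k k dvd int (alpha d v k)" using diag divs by blast
  have ii: "\<forall>k<d. - P k d * int (wvec d v d) = (\<Sum>j\<in>{k..<d}. P k j * int (wvec d v j))"
    using iii by blast
  show ?thesis
    apply (rule exI[of _ id], rule exI[of _ U], rule exI[of _ P])
    apply (simp only: e1 id_apply)
    apply (intro conjI)
           apply (rule perm)
          apply (rule U(1))
         apply (rule U(2))
        apply (rule Pd)
       apply (rule tri)
      apply (rule dd)
     apply (rule red)
    apply (rule ii)
    done
qed

end

theorem proposition5p2:
  fixes d :: nat and v :: "nat \<Rightarrow> nat \<Rightarrow> int"
  assumes "d \<ge> 2" and "IP_lattice_simplex d v"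
  shows "\<exists>(\<sigma> :: nat \<Rightarrow> nat) (U :: int mat) (P :: nat \<Rightarrow> nat \<Rightarrow> int).
     \<sigma> permutes {..d} \<and>
     U \<in> carrier_mat d d \<and> (det U = 1 \<or> det U = -1) \<and>
     (\<forall>j\<le>d. \<forall>i<d. P i j = (\<Sum>l<d. U $$ (i, l) * v (\<sigma> j) l)) \<and>
     (\<forall>i<d. \<forall>j<d. j < i \<longrightarrow> P i j = 0) \<and>
     (\<forall>k<d. P k k \<ge> 1 \<and> P k k dvd int (alpha d (v \<circ> \<sigma>) k)) \<and>
     (\<forall>k<d. \<forall>i<k. 0 \<le> P i k \<and> P i k < P k k) \<and>
     (\<forall>k<d. - P k d * int (wvec d (v \<circ> \<sigma>) d) =
              (\<Sum>j\<in>{k..<d}. P k j * int (wvec d (v \<circ> \<sigma>) j)))"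
proof -
  interpret ip d v using assms(2) by unfold_locales
  show ?thesis by (rule main_ip)
qed


end
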